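(* For every approval-based SCV instance there exists a committee that simultaneously satisfies weak-SW-JR and IW-JR, and such a committee is produced by the following procedure: (1) start with $W=\emptyset$; (2) for each $j=1,\ldots,\ell$, repeatedly add to $W$ a candidate of $C_j$ whose support among voters not yet having an approved candidate in $W\cap C_j$ is largest, as long as this support is at least $n/k_j$ and fewer than $k_j$ candidates of $C_j$ have been chosen; (3) then, using the remaining positions, repeatedly add an unelected candidate (from a subset $C_j$ with $|W\cap C_j|<k_j$) whose support among voters having no approved candidate in $W$ is largest, as long as this support is at least $n/k$; (4) fill any remaining positions arbitrarily so that $|W\cap C_j|=k_j$ for all $j$. Here the support of a candidate $c$ among a set of voters $S$ is $|\{i\in S: c\in A_i\}|$.
   Context: An approval-based sub-committee voting (SCV) instance consists of a set of voters $N=\{1,\ldots,n\}$, a finite set of candidates $C$ partitioned into candidate subsets $C_1,\ldots,C_\ell$, positive integer quotas $k_j\le |C_j|$ with $k=\sum_{j=1}^\ell k_j$, and approval ballots $A_i\subseteq C$ for $i\in N$. A committee is a set $W\subseteq C$ with $|W\cap C_j|=k_j$ for every $j$. $W$ satisfies Intra-wise JR (IW-JR) if for every $X\subseteq N$ and every $j$, whenever $|X|\ge n/k_j$ and $|(\bigcap_{i\in X}A_i)\cap C_j|\ge 1$, we have $|W\cap C_j\cap \bigcup_{i\in X}A_i|\ge 1$. $W$ satisfies weak-SW-JR if for every $X\subseteq N$ with $|X|\ge n/k$ and $|(\bigcap_{i\in X}A_i)\cap C_j|\ge 1$ for all $j=1,\ldots,\ell$ we have $|W\cap \bigcup_{i\in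 X}A_i|\ge 1$. *)

theory Defs
  imports Main Complex_Main
begin

(* Voters: finite set N :: 'v set, n = card N.
   Candidates: C :: 'c set, partitioned into Cs 0, ..., Cs (l-1) (0-indexed).
   Quotas: kq j for j < l; k = sum of quotas.  Ballots: A :: 'v => 'c set. *)

definition total_k :: "nat \<Rightarrow> (nat \<Rightarrow> nat) \<Rightarrow> nat" where
  "total_k l kq = (\<Sum>j<l. kq j)"

definition scv_instance ::
  "'v set \<Rightarrow> ('v \<Rightarrow> 'c set) \<Rightarrow> 'c set \<Rightarrow> nat \<Rightarrow> (nat \<Rightarrow> 'c set) \<Rightarrow> (nat \<Rightarrow> nat) \<Rightarrow> bool" where
  "scv_instance N A C l Cs kq \<longleftrightarrow>
     finite N \<and> N \<noteq> {} \<and> finite C \<and> l \<ge> 1 \<and>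
     (\<forall>j<l. Cs j \<subseteq> C) \<and>
     (\<forall>j<l. \<forall>j'<l. j \<noteq> j' \<longrightarrow> Cs j \<inter> Cs j' = {}) \<and>
     (\<Union>j<l. Cs j) = C \<and>
     (\<forall>j<l. 1 \<le> kq j \<and> kq j \<le> card (Cs j)) \<and>
     (\<forall>i\<in>N. A i \<subseteq> C)"

definition is_committee :: "'c set \<Rightarrow> nat \<Rightarrow> (nat \<Rightarrow> 'c set) \<Rightarrow> (nat \<Rightarrow> nat) \<Rightarrow> 'c set \<Rightarrow> bool" where
  "is_committee C l Cs kq W \<longleftrightarrow> W \<subseteq> C \<and> (\<forall>j<l. card (W \<inter> Cs j) = kq j)"

definition IW_JR ::
  "'v set \<Rightarrow> ('v \<Rightarrow> 'c set) \<Rightarrow> nat \<Rightarrow> (nat \<Rightarrow> 'c set) \<Rightarrow> (nat \<Rightarrow> nat) \<Rightarrow> 'c set \<Rightarrow> bool" where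
  "IW_JR N A l Cs kq W \<longleftrightarrow>
     (\<forall>X. X \<subseteq> N \<longrightarrow> (\<forall>j<l.
        real (card X) \<ge> real (card N) / real (kq j) \<and>
        card {c \<in> Cs j. \<forall>i\<in>X. c \<in> A i} \<ge> 1 \<longrightarrow>
        card (W \<inter> Cs j \<inter> (\<Union>i\<in>X. A i)) \<ge> 1))"

definition weak_SW_JR ::
  "'v set \<Rightarrow> ('v \<Rightarrow> 'c set) \<Rightarrow> nat \<Rightarrow> (nat \<Rightarrow> 'c set) \<Rightarrow> (nat \<Rightarrow> nat) \<Rightarrow> 'c set \<Rightarrow> bool" where
  "weak_SW_JR N A l Cs kq W \<longleftrightarrow>
     (\<forall>X. X \<subseteq> N \<longrightarrow>
        real (card X) \<ge> real (card N) / real (total_k l kq) \<and>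
        (\<forall>j<l. card {c \<in> Cs j. \<forall>i\<in>X. c \<in> A i} \<ge> 1) \<longrightarrow>
        card (W \<inter> (\<Union>i\<in>X. A i)) \<ge> 1)"

definition support :: "('v \<Rightarrow> 'c set) \<Rightarrow> 'v set \<Rightarrow> 'c \<Rightarrow> nat" where
  "support A S c = card {i \<in> S. c \<in> A i}"

definition uncov_j :: "'v set \<Rightarrow> ('v \<Rightarrow> 'c set) \<Rightarrow> (nat \<Rightarrow> 'c set) \<Rightarrow> nat \<Rightarrow> 'c set \<Rightarrow> 'v set" where
  "uncov_j N A Cs j W = {i \<in> N. A i \<inter> W \<inter> Cs j = {}}"

definition step2 ::
  "'v set \<Rightarrow> ('v \<Rightarrow> 'c set) \<Rightarrow> (nat \<Rightarrow> 'c set) \<Rightarrow> (nat \<Rightarrow> nat) \<Rightarrow> nat \<Rightarrow> 'c set \<Rightarrow> 'c set \<Rightarrow> bool" where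
  "step2 N A Cs kq j W W' \<longleftrightarrow>
     card (W \<inter> Cs j) < kq j \<and>
     (\<exists>c \<in> Cs j - W.
        real (support A (uncov_j N A Cs j W) c) \<ge> real (card N) / real (kq j) \<and>
        (\<forall>c' \<in> Cs j - W. support A (uncov_j N A Cs j W) c' \<le> support A (uncov_j N A Cs j W) c) \<and>
        W' = insert c W)"

definition stop2 ::
  "'v set \<Rightarrow> ('v \<Rightarrow> 'c set) \<Rightarrow> (nat \<Rightarrow> 'c set) \<Rightarrow> (nat \<Rightarrow> nat) \<Rightarrow> nat \<Rightarrow> 'c set \<Rightarrow> bool" where
  "stop2 N A Cs kq j W \<longleftrightarrow>
     \<not> (card (W \<inter> Cs j) < kq j \<and>
        (\<exists>c \<in> Cs j - W. real (support A (uncov_j N A Cs j W) c) \<ge> real (card N) / real (kq j)))"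

definition eligible3 :: "'c set \<Rightarrow> nat \<Rightarrow> (nat \<Rightarrow> 'c set) \<Rightarrow> (nat \<Rightarrow> nat) \<Rightarrow> 'c set \<Rightarrow> 'c \<Rightarrow> bool" where
  "eligible3 C l Cs kq W c \<longleftrightarrow> c \<in> C - W \<and> (\<exists>j<l. c \<in> Cs j \<and> card (W \<inter> Cs j) < kq j)"

definition uncov :: "'v set \<Rightarrow> ('v \<Rightarrow> 'c set) \<Rightarrow> 'c set \<Rightarrow> 'v set" where
  "uncov N A W = {i \<in> N. A i \<inter> W = {}}"

definition step3 ::
  "'v set \<Rightarrow> ('v \<Rightarrow> 'c set) \<Rightarrow> 'c set \<Rightarrow> nat \<Rightarrow> (nat \<Rightarrow> 'c set) \<Rightarrow> (nat \<Rightarrow> nat) \<Rightarrow> 'c set \<Rightarrow> 'c set \<Rightarrow> bool" where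
  "step3 N A C l Cs kq W W' \<longleftrightarrow>
     (\<exists>c. eligible3 C l Cs kq W c \<and>
        real (support A (uncov N A W) c) \<ge> real (card N) / real (total_k l kq) \<and>
        (\<forall>c'. eligible3 C l Cs kq W c' \<longrightarrow> support A (uncov N A W) c' \<le> support A (uncov N A W) c) \<and>
        W' = insert c W)"

definition stop3 ::
  "'v set \<Rightarrow> ('v \<Rightarrow> 'c set) \<Rightarrow> 'c set \<Rightarrow> nat \<Rightarrow> (nat \<Rightarrow> 'c set) \<Rightarrow> (nat \<Rightarrow> nat) \<Rightarrow> 'c set \<Rightarrow> bool" where
  "stop3 N A C l Cs kq W \<longleftrightarrow>
     (\<forall>c. eligible3 C l Cs kq W c \<longrightarrow>
        real (support A (uncov N A W) c) < real (card N) / real (total_k l kq))"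

text \<open>W is a possible output of the (nondeterministic: ties, arbitrary filling) procedure.
  Ws j is the committee before processing subset j (Ws 0 = {}), Ws l after phase (2),
  W3 after phase (3), W after phase (4).\<close>
definition procedure_output ::
  "'v set \<Rightarrow> ('v \<Rightarrow> 'c set) \<Rightarrow> 'c set \<Rightarrow> nat \<Rightarrow> (nat \<Rightarrow> 'c set) \<Rightarrow> (nat \<Rightarrow> nat) \<Rightarrow> 'c set \<Rightarrow> bool" where
  "procedure_output N A C l Cs kq W \<longleftrightarrow>
     (\<exists>Ws W3. Ws 0 = {} \<and>
        (\<forall>j<l. (step2 N A Cs kq j)\<^sup>*\<^sup>* (Ws j) (Ws (Suc j)) \<and> stop2 N A Cs kq j (Ws (Suc j))) \<and>
        (step3 N A C l Cs kq)\<^sup>*\<^sup>* (Ws l) W3 \<and> stop3 N A C l Cs kq W3 \<and>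
        W3 \<subseteq> W \<and> is_committee C l Cs kq W)"

end

theory Submission
  imports Defs
begin

definition inv2 :: "'v set \<Rightarrow> ('v \<Rightarrow> 'c set) \<Rightarrow> (nat \<Rightarrow> 'c set) \<Rightarrow> (nat \<Rightarrow> nat) \<Rightarrow> nat \<Rightarrow> 'c set \<Rightarrow> bool" where
  "inv2 N A Cs kq j W \<longleftrightarrow> card (W \<inter> Cs j) \<le> kq j \<and>
     real (card (N - uncov_j N A Cs j W)) \<ge> real (card (W \<inter> Cs j)) * real (card N) / real (kq j)"

lemma uncov_j_eq: "W \<inter> Cs j = W' \<inter> Cs j \<Longrightarrow> uncov_j N A Cs j W = uncov_j N A Cs j W'"
  unfolding uncov_j_def by (simp add: Int_assoc)

lemma inv2_cong: "W \<inter> Cs j = W' \<inter> Cs j \<Longrightarrow> inv2 N A Cs kq j W = inv2 N A Cs kq j W'"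
  unfolding inv2_def using uncov_j_eq[of W Cs j W' N A] by simp

lemma chain_exists:
  assumes "finite C" "W \<subseteq> C"
    "\<And>W. W \<subseteq> C \<Longrightarrow> \<not> S W \<Longrightarrow> \<exists>W'. R W W' \<and> W \<subset> W' \<and> W' \<subseteq> C"
  shows "\<exists>W'. R\<^sup>*\<^sup>* W W' \<and> S W' \<and> W' \<subseteq> C"
  using assms(2)
proof (induction "card (C - W)" arbitrary: W rule: less_induct)
  case less
  show ?case
  proof (cases "S W")
    case True
    then show ?thesis using less.prems by blast
  next
    case False
    then obtain W' where W': "R W W'" "W \<subset> W'" "W' \<subseteq> C" using assms(3) less.prems by blast
    have "C - W' \<subset> C - W" using W' by blast
    then have "card (C - W') < card (C - W)" using assms(1) by (meson finite_Diff psubset_card_mono)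
    then obtain W'' where "R\<^sup>*\<^sup>* W' W''" "S W''" "W'' \<subseteq> C" using less.hyps W'(3) by blast
    then show ?thesis using W'(1) by (meson converse_rtranclp_into_rtranclp)
  qed
qed

primrec iter2 :: "(nat \<Rightarrow> 'c set \<Rightarrow> 'c set) \<Rightarrow> nat \<Rightarrow> 'c set" where
  "iter2 f 0 = {}" | "iter2 f (Suc j) = f j (iter2 f j)"

context
  fixes N :: "'v set" and A :: "'v \<Rightarrow> 'c set" and C :: "'c set"
    and l :: nat and Cs :: "nat \<Rightarrow> 'c set" and kq :: "nat \<Rightarrow> nat"
  assumes inst: "scv_instance N A C l Cs kq"
begin

lemma finN: "finite N" using inst unfolding scv_instance_def by auto
lemma Nne: "N \<noteq> {}" using inst unfolding scv_instance_def by auto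
lemma finC: "finite C" using inst unfolding scv_instance_def by auto
lemma l1: "l \<ge> 1" using inst unfolding scv_instance_def by auto
lemma CsC: "j < l \<Longrightarrow> Cs j \<subseteq> C" using inst unfolding scv_instance_def by auto
lemma disj: "j < l \<Longrightarrow> j' < l \<Longrightarrow> j \<noteq> j' \<Longrightarrow> Cs j \<inter> Cs j' = {}"
  using inst unfolding scv_instance_def by auto
lemma UC: "(\<Union>j<l. Cs j) = C" using inst unfolding scv_instance_def by auto
lemma kq1: "j < l \<Longrightarrow> 1 \<le> kq j" using inst unfolding scv_instance_def by auto
lemma kqC: "j < l \<Longrightarrow> kq j \<le> card (Cs j)" using inst unfolding scv_instance_def by auto

lemma card_decomp:
  assumes "W \<subseteq> C" shows "card W = (\<Sum>j<l. card (W \<inter> Cs j))"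
proof -
  have "W = (\<Union>j<l. W \<inter> Cs j)" using assms UC by blast
  moreover have "card (\<Union>j<l. W \<inter> Cs j) = (\<Sum>j<l. card (W \<inter> Cs j))"
    apply (rule card_UN_disjoint)
    using assms finC disj by (auto intro: finite_subset)
  ultimately show ?thesis by simp
qed

lemma step2_chain:
  assumes "j < l" "(step2 N A Cs kq j)\<^sup>*\<^sup>* W W'" "W \<subseteq> C"
  shows "W' \<subseteq> C \<and> W \<subseteq> W' \<and> W' \<subseteq> W \<union> Cs j \<and> (inv2 N A Cs kq j W \<longrightarrow> inv2 N A Cs kq j W')"
  using assms(2)
proof (induction rule: rtranclp_induct)
  case base
  then show ?case using assms(3) by auto
next
  case (step Y Z)
  from step.hyps(2) obtain c where c: "c \<in> Cs j" "c \<notin> Y" "Z = insert c Y" "card (Y \<inter> Cs j) < kq j"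
    "real (support A (uncov_j N A Cs j Y) c) \<ge> real (card N) / real (kq j)"
    unfolding step2_def by blast
  have YC: "Y \<subseteq> C" using step.IH by blast
  have fin: "finite (Y \<inter> Cs j)" using YC finC by (meson finite_Int finite_subset)
  have "Z \<inter> Cs j = insert c (Y \<inter> Cs j)" using c by auto
  then have card1: "card (Z \<inter> Cs j) = Suc (card (Y \<inter> Cs j))" using fin c by simp
  have seteq: "N - uncov_j N A Cs j Z = (N - uncov_j N A Cs j Y) \<union> {i \<in> uncov_j N A Cs j Y. c \<in> A i}"
    using c unfolding uncov_j_def by auto
  have cardeq: "card (N - uncov_j N A Cs j Z) = card (N - uncov_j N A Cs j Y) + support A (uncov_j N A Cs j Y) c"
    unfolding support_def seteq
    by (rule card_Un_disjoint) (use finN in \<open>auto simp: uncov_j_def\<close>)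
  have inv: "inv2 N A Cs kq j Z" if iv: "inv2 N A Cs kq j Y"
  proof -
    have q: "real (kq j) > 0" using kq1[OF assms(1)] by simp
    have e: "real (Suc (card (Y \<inter> Cs j))) * real (card N) / real (kq j)
        = real (card (Y \<inter> Cs j)) * real (card N) / real (kq j) + real (card N) / real (kq j)"
      by (simp add: distrib_right add_divide_distrib)
    show ?thesis using iv c(4,5) unfolding inv2_def card1 cardeq e by simp
  qed
  show ?case using step.IH c CsC[OF assms(1)] inv by auto
qed

lemma step3_chain:
  assumes "(step3 N A C l Cs kq)\<^sup>*\<^sup>* W0 W" "W0 \<subseteq> C" "\<forall>j<l. card (W0 \<inter> Cs j) \<le> kq j"
  shows "W \<subseteq> C \<and> W0 \<subseteq> W \<and> (\<forall>j<l. card (W \<inter> Cs j) \<le> kq j) \<and>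
    real (card (N - uncov N A W)) - real (card (N - uncov N A W0)) \<ge>
      (real (card W) - real (card W0)) * real (card N) / real (total_k l kq)"
  using assms(1)
proof (induction rule: rtranclp_induct)
  case base
  then show ?case using assms(2,3) by auto
next
  case (step Y Z)
  from step.hyps(2) obtain c j where c: "c \<in> C" "c \<notin> Y" "j < l" "c \<in> Cs j" "card (Y \<inter> Cs j) < kq j"
    "Z = insert c Y"
    "real (support A (uncov N A Y) c) \<ge> real (card N) / real (total_k l kq)"
    unfolding step3_def eligible3_def by blast
  have YC: "Y \<subseteq> C" using step.IH by blast
  have finY: "finite Y" using YC finC by (meson finite_subset)
  have cardZ: "card Z = Suc (card Y)" using c finY by simp
  have seteq: "N - uncov N A Z = (N - uncov N A Y) \<union> {i \<in> uncov N A Y. c \<in> A i}"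
    using c unfolding uncov_def by auto
  have cardeq: "card (N - uncov N A Z) = card (N - uncov N A Y) + support A (uncov N A Y) c"
    unfolding support_def seteq
    by (rule card_Un_disjoint) (use finN in \<open>auto simp: uncov_def\<close>)
  have bound: "\<forall>j'<l. card (Z \<inter> Cs j') \<le> kq j'"
  proof (intro allI impI)
    fix j' assume j': "j' < l"
    show "card (Z \<inter> Cs j') \<le> kq j'"
    proof (cases "j' = j")
      case True
      have fin: "finite (Y \<inter> Cs j)" using finY by simp
      have "Z \<inter> Cs j = insert c (Y \<inter> Cs j)" using c by auto
      then show ?thesis using True fin c by simp
    next
      case False
      then have "c \<notin> Cs j'" using disj[OF c(3) j'] c(4) by blast
      then have "Z \<inter> Cs j' = Y \<inter> Cs j'" using c by auto
      then show ?thesis using step.IH j' by simp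
    qed
  qed
  have e: "(real (card Z) - real (card W0)) * real (card N) / real (total_k l kq)
     = (real (card Y) - real (card W0)) * real (card N) / real (total_k l kq) + real (card N) / real (total_k l kq)"
    unfolding cardZ by (simp add: algebra_simps add_divide_distrib diff_divide_distrib)
  show ?case using step.IH c bound unfolding e cardeq by auto
qed


lemma phase2_inv:
  assumes "Ws 0 = {}" "\<forall>j<l. (step2 N A Cs kq j)\<^sup>*\<^sup>* (Ws j) (Ws (Suc j))"
  shows "m \<le> l \<Longrightarrow> Ws m \<subseteq> C \<and> (\<forall>j<l. m \<le> j \<longrightarrow> Ws m \<inter> Cs j = {}) \<and>
     (\<forall>j<m. Ws m \<inter> Cs j = Ws (Suc j) \<inter> Cs j \<and> inv2 N A Cs kq j (Ws (Suc j)))"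
proof (induction m)
  case 0
  show ?case using assms(1) by auto
next
  case (Suc m)
  then have ml: "m < l" by simp
  have IH: "Ws m \<subseteq> C" "\<forall>j<l. m \<le> j \<longrightarrow> Ws m \<inter> Cs j = {}"
     "\<forall>j<m. Ws m \<inter> Cs j = Ws (Suc j) \<inter> Cs j \<and> inv2 N A Cs kq j (Ws (Suc j))"
    using Suc by auto
  have ch: "Ws (Suc m) \<subseteq> C" "Ws m \<subseteq> Ws (Suc m)" "Ws (Suc m) \<subseteq> Ws m \<union> Cs m"
    "inv2 N A Cs kq m (Ws m) \<longrightarrow> inv2 N A Cs kq m (Ws (Suc m))"
    using step2_chain[OF ml assms(2)[rule_format, OF ml] IH(1)] by auto
  have "Ws m \<inter> Cs m = {}" using IH(2) ml by auto
  then have "inv2 N A Cs kq m (Ws m)" unfolding inv2_def by simp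
  with ch have invm: "inv2 N A Cs kq m (Ws (Suc m))" by blast
  have other: "Ws (Suc m) \<inter> Cs j = Ws m \<inter> Cs j" if "j < l" "j \<noteq> m" for j
    using ch(2,3) disj[OF ml that(1)] that(2) by blast
  show ?case
  proof (intro conjI allI impI)
    show "Ws (Suc m) \<subseteq> C" by (rule ch(1))
  next
    fix j assume "j < l" "Suc m \<le> j"
    then show "Ws (Suc m) \<inter> Cs j = {}" using other IH(2) by auto
  next
    fix j assume j: "j < Suc m"
    show "Ws (Suc m) \<inter> Cs j = Ws (Suc j) \<inter> Cs j"
      using j other[of j] IH(3) ml by (cases "j = m") auto
  next
    fix j assume j: "j < Suc m"
    show "inv2 N A Cs kq j (Ws (Suc j))"
      using j IH(3) invm by (cases "j = m") auto
  qed
qed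

lemma card_empty_fin: "finite S \<Longrightarrow> \<not> 1 \<le> card S \<Longrightarrow> S = {}"
  by (simp add: Suc_le_eq card_gt_0_iff)

lemma card_nonempty: "1 \<le> card S \<Longrightarrow> \<exists>x. x \<in> S"
  by (metis card.empty ex_in_conv not_one_le_zero)

lemma correct:
  assumes po: "procedure_output N A C l Cs kq W"
  shows "is_committee C l Cs kq W \<and> weak_SW_JR N A l Cs kq W \<and> IW_JR N A l Cs kq W"
proof -
  obtain Ws W3 where ws0: "Ws 0 = {}"
    and ws: "\<forall>j<l. (step2 N A Cs kq j)\<^sup>*\<^sup>* (Ws j) (Ws (Suc j)) \<and> stop2 N A Cs kq j (Ws (Suc j))"
    and w3: "(step3 N A C l Cs kq)\<^sup>*\<^sup>* (Ws l) W3" and st3: "stop3 N A C l Cs kq W3"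
    and sub: "W3 \<subseteq> W" and com: "is_committee C l Cs kq W"
    using po unfolding procedure_output_def by blast
  have P2: "Ws l \<subseteq> C \<and> (\<forall>j<l. Ws l \<inter> Cs j = Ws (Suc j) \<inter> Cs j \<and> inv2 N A Cs kq j (Ws (Suc j)))"
  proof -
    have "\<forall>j<l. (step2 N A Cs kq j)\<^sup>*\<^sup>* (Ws j) (Ws (Suc j))" using ws by blast
    from phase2_inv[of Ws l, OF ws0 this] show ?thesis by simp
  qed
  have inv2l: "\<forall>j<l. inv2 N A Cs kq j (Ws l)"
  proof (intro allI impI)
    fix j assume "j < l"
    then have "Ws l \<inter> Cs j = Ws (Suc j) \<inter> Cs j" "inv2 N A Cs kq j (Ws (Suc j))" using P2 by auto
    then show "inv2 N A Cs kq j (Ws l)" using inv2_cong[of "Ws l" Cs j "Ws (Suc j)" N A kq] by simp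
  qed
  have P3: "W3 \<subseteq> C \<and> Ws l \<subseteq> W3 \<and> (\<forall>j<l. card (W3 \<inter> Cs j) \<le> kq j) \<and>
    real (card (N - uncov N A W3)) - real (card (N - uncov N A (Ws l))) \<ge>
      (real (card W3) - real (card (Ws l))) * real (card N) / real (total_k l kq)"
    apply (rule step3_chain[OF w3])
    using P2 apply blast
    using inv2l unfolding inv2_def by blast
  have WC: "W \<subseteq> C" using com unfolding is_committee_def by simp
  have finW: "finite W" using WC finC by (meson finite_subset)
  have npos: "real (card N) > 0" using finN Nne by (simp add: card_gt_0_iff)
  have "kq 0 \<le> (\<Sum>j<l. kq j)" using l1 by (intro member_le_sum) auto
  then have "total_k l kq > 0" using kq1[of 0] l1 unfolding total_k_def by simp
  then have kpos: "real (total_k l kq) > 0" by simp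
  have wsjr: "weak_SW_JR N A l Cs kq W"
    unfolding weak_SW_JR_def
  proof (intro allI impI)
    fix X assume XN: "X \<subseteq> N" and h: "real (card N) / real (total_k l kq) \<le> real (card X) \<and>
        (\<forall>j<l. 1 \<le> card {c \<in> Cs j. \<forall>i\<in>X. c \<in> A i})"
    show "1 \<le> card (W \<inter> (\<Union>i\<in>X. A i))"
    proof (rule ccontr)
      assume "\<not> 1 \<le> card (W \<inter> (\<Union>i\<in>X. A i))"
      then have emp: "W \<inter> (\<Union>i\<in>X. A i) = {}" using finW by (intro card_empty_fin) auto
      have "real (card N) / real (total_k l kq) > 0" using npos kpos by simp
      then have "card X > 0" using h by linarith
      then obtain x where x: "x \<in> X" by (metis card.empty ex_in_conv less_irrefl)
      have Xunc: "X \<subseteq> uncov N A W3" using XN emp sub unfolding uncov_def by blast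
      have full: "card (W3 \<inter> Cs j) = kq j" if j: "j < l" for j
      proof -
        have "1 \<le> card {c \<in> Cs j. \<forall>i\<in>X. c \<in> A i}" using h j by blast
        then obtain c where "c \<in> {c \<in> Cs j. \<forall>i\<in>X. c \<in> A i}" using card_nonempty by blast
        then have c: "c \<in> Cs j" "\<forall>i\<in>X. c \<in> A i" by auto
        have cW3: "c \<notin> W3" using c x emp sub by blast
        have "\<not> card (W3 \<inter> Cs j) < kq j"
        proof
          assume lt: "card (W3 \<inter> Cs j) < kq j"
          then have "eligible3 C l Cs kq W3 c" unfolding eligible3_def using c CsC j cW3 by blast
          then have a: "real (support A (uncov N A W3) c) < real (card N) / real (total_k l kq)"
            using st3 unfolding stop3_def by blast
          have "card X \<le> support A (uncov N A W3) c" unfolding support_def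
            by (rule card_mono) (use finN Xunc c in \<open>auto simp: uncov_def\<close>)
          then show False using a h by linarith
        qed
        then show ?thesis using P3 j by (meson le_antisym not_less)
      qed
      have cardW3: "card W3 = total_k l kq"
        unfolding card_decomp[OF conjunct1[OF P3]] total_k_def by (rule sum.cong) (auto simp: full)
      have cardWl: "card (Ws l) = (\<Sum>j<l. card (Ws l \<inter> Cs j))" using card_decomp[OF conjunct1[OF P2]] .
      define cov where "cov = real (card (N - uncov N A (Ws l)))"
      have each: "real (card (Ws l \<inter> Cs j)) * real (card N) \<le> cov * real (kq j)" if j: "j < l" for j
      proof -
        have q: "real (kq j) > 0" using kq1[OF j] by simp
        have "N - uncov_j N A Cs j (Ws l) \<subseteq> N - uncov N A (Ws l)"
          unfolding uncov_j_def uncov_def by blast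
        then have "card (N - uncov_j N A Cs j (Ws l)) \<le> card (N - uncov N A (Ws l))"
          using finN by (intro card_mono) auto
        moreover have "real (card (N - uncov_j N A Cs j (Ws l))) \<ge> real (card (Ws l \<inter> Cs j)) * real (card N) / real (kq j)"
          using inv2l j unfolding inv2_def by blast
        ultimately have "real (card (Ws l \<inter> Cs j)) * real (card N) / real (kq j) \<le> cov"
          unfolding cov_def by linarith
        then show ?thesis using q by (simp add: pos_divide_le_eq)
      qed
      have "(\<Sum>j<l. real (card (Ws l \<inter> Cs j)) * real (card N)) \<le> (\<Sum>j<l. cov * real (kq j))"
        using each by (intro sum_mono) auto
      then have covl: "real (card (Ws l)) * real (card N) \<le> cov * real (total_k l kq)"
        unfolding cardWl total_k_def by (simp add: sum_distrib_left sum_distrib_right)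
      define cov3 where "cov3 = real (card (N - uncov N A W3))"
      have "cov3 - cov \<ge> (real (total_k l kq) - real (card (Ws l))) * real (card N) / real (total_k l kq)"
        using P3 cardW3 unfolding cov_def cov3_def by simp
      then have "(cov3 - cov) * real (total_k l kq) \<ge> (real (total_k l kq) - real (card (Ws l))) * real (card N)"
        using kpos by (simp add: pos_divide_le_eq)
      then have "cov3 * real (total_k l kq) \<ge> real (card N) * real (total_k l kq)"
        using covl by (simp add: algebra_simps)
      then have ge: "cov3 \<ge> real (card N)" using kpos by simp
      have "N - uncov N A W3 \<subset> N" using x XN Xunc unfolding uncov_def by blast
      then have "card (N - uncov N A W3) < card N" using finN by (meson psubset_card_mono)
      then show False using ge unfolding cov3_def by simp
    qed
  qed
  have iwjr: "IW_JR N A l Cs kq W"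
    unfolding IW_JR_def
  proof (intro allI impI)
    fix X j assume XN: "X \<subseteq> N" and j: "j < l" and h: "real (card N) / real (kq j) \<le> real (card X) \<and>
       1 \<le> card {c \<in> Cs j. \<forall>i\<in>X. c \<in> A i}"
    show "1 \<le> card (W \<inter> Cs j \<inter> (\<Union>i\<in>X. A i))"
    proof (rule ccontr)
      assume "\<not> 1 \<le> card (W \<inter> Cs j \<inter> (\<Union>i\<in>X. A i))"
      then have emp: "W \<inter> Cs j \<inter> (\<Union>i\<in>X. A i) = {}" using finW by (intro card_empty_fin) auto
      have q: "real (kq j) > 0" using kq1[OF j] by simp
      have "real (card N) / real (kq j) > 0" using npos q by simp
      then have "card X > 0" using h by linarith
      then obtain x where x: "x \<in> X" by (metis card.empty ex_in_conv less_irrefl)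
      have "1 \<le> card {c \<in> Cs j. \<forall>i\<in>X. c \<in> A i}" using h by blast
      then obtain c where "c \<in> {c \<in> Cs j. \<forall>i\<in>X. c \<in> A i}" using card_nonempty by blast
      then have c: "c \<in> Cs j" "\<forall>i\<in>X. c \<in> A i" by auto
      define Y where "Y = Ws (Suc j)"
      have YW: "Y \<inter> Cs j \<subseteq> W" using P2 P3 sub j unfolding Y_def by blast
      have cY: "c \<notin> Y" using YW emp c x by blast
      have Xunc: "X \<subseteq> uncov_j N A Cs j Y" using XN YW emp unfolding uncov_j_def by blast
      have "card X \<le> support A (uncov_j N A Cs j Y) c" unfolding support_def
        by (rule card_mono) (use finN Xunc c in \<open>auto simp: uncov_j_def\<close>)
      then have sup: "real (support A (uncov_j N A Cs j Y) c) \<ge> real (card N) / real (kq j)"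
        using h by linarith
      have "stop2 N A Cs kq j Y" using ws j unfolding Y_def by blast
      then have "\<not> card (Y \<inter> Cs j) < kq j" using sup c cY unfolding stop2_def by blast
      moreover have iv: "inv2 N A Cs kq j Y" using P2 j unfolding Y_def by blast
      ultimately have "card (Y \<inter> Cs j) = kq j" unfolding inv2_def by simp
      then have "real (card (N - uncov_j N A Cs j Y)) \<ge> real (card N)"
        using iv q unfolding inv2_def by simp
      moreover have "N - uncov_j N A Cs j Y \<subset> N" using x XN Xunc unfolding uncov_j_def by blast
      then have "card (N - uncov_j N A Cs j Y) < card N" using finN by (meson psubset_card_mono)
      ultimately show False by simp
    qed
  qed
  show ?thesis using com wsjr iwjr by blast
qed


lemma phase2_step_exists:
  assumes j: "j < l" and WC: "W \<subseteq> C"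
  shows "\<exists>W'. (step2 N A Cs kq j)\<^sup>*\<^sup>* W W' \<and> stop2 N A Cs kq j W' \<and> W' \<subseteq> C"
proof (rule chain_exists[OF finC WC])
  fix Y assume YC: "Y \<subseteq> C" and ns: "\<not> stop2 N A Cs kq j Y"
  then have lt: "card (Y \<inter> Cs j) < kq j" and
    ex: "\<exists>c \<in> Cs j - Y. real (support A (uncov_j N A Cs j Y) c) \<ge> real (card N) / real (kq j)"
    unfolding stop2_def by auto
  define S where "S = Cs j - Y"
  define g where "g = support A (uncov_j N A Cs j Y)"
  have finS: "finite S" unfolding S_def using CsC[OF j] finC by (meson finite_Diff finite_subset)
  have neS: "S \<noteq> {}" using ex unfolding S_def by blast
  have "Max (g ` S) \<in> g ` S" using finS neS by simp
  then obtain c0 where c0: "c0 \<in> S" "g c0 = Max (g ` S)" by (metis imageE)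
  have mx: "\<forall>c'\<in>S. g c' \<le> g c0" using c0 finS by auto
  obtain c where c: "c \<in> S" "real (g c) \<ge> real (card N) / real (kq j)" using ex unfolding S_def g_def by blast
  have "real (g c0) \<ge> real (card N) / real (kq j)" using mx c by (meson of_nat_le_iff order_trans)
  then have "step2 N A Cs kq j Y (insert c0 Y)"
    unfolding step2_def using lt c0(1) mx unfolding S_def g_def by blast
  moreover have "Y \<subset> insert c0 Y" "insert c0 Y \<subseteq> C" using c0(1) YC CsC[OF j] unfolding S_def by auto
  ultimately show "\<exists>W'. step2 N A Cs kq j Y W' \<and> Y \<subset> W' \<and> W' \<subseteq> C" by blast
qed

lemma phase3_exists:
  assumes WC: "W \<subseteq> C"
  shows "\<exists>W'. (step3 N A C l Cs kq)\<^sup>*\<^sup>* W W' \<and> stop3 N A C l Cs kq W' \<and> W' \<subseteq> C"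
proof (rule chain_exists[OF finC WC])
  fix Y assume YC: "Y \<subseteq> C" and ns: "\<not> stop3 N A C l Cs kq Y"
  then obtain c where c: "eligible3 C l Cs kq Y c"
    "real (support A (uncov N A Y) c) \<ge> real (card N) / real (total_k l kq)"
    unfolding stop3_def by (auto simp: not_less)
  define S where "S = {c. eligible3 C l Cs kq Y c}"
  define g where "g = support A (uncov N A Y)"
  have finS: "finite S" unfolding S_def eligible3_def using finC by (auto intro: finite_subset)
  have neS: "S \<noteq> {}" using c unfolding S_def by blast
  have "Max (g ` S) \<in> g ` S" using finS neS by simp
  then obtain c0 where c0: "c0 \<in> S" "g c0 = Max (g ` S)" by (metis imageE)
  have mx: "\<forall>c'\<in>S. g c' \<le> g c0" using c0 finS by auto
  have "real (g c0) \<ge> real (card N) / real (total_k l kq)"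
    using mx c unfolding S_def g_def by (meson mem_Collect_eq of_nat_le_iff order_trans)
  then have "step3 N A C l Cs kq Y (insert c0 Y)"
    unfolding step3_def using c0(1) mx unfolding S_def g_def by blast
  moreover have "c0 \<in> C - Y" using c0(1) unfolding S_def eligible3_def by blast
  then have "Y \<subset> insert c0 Y" "insert c0 Y \<subseteq> C" using YC by auto
  ultimately show "\<exists>W'. step3 N A C l Cs kq Y W' \<and> Y \<subset> W' \<and> W' \<subseteq> C" by blast
qed

lemma exists_output: "\<exists>W. procedure_output N A C l Cs kq W"
proof -
  define P where "P = (\<lambda>j W W'. (step2 N A Cs kq j)\<^sup>*\<^sup>* W W' \<and> stop2 N A Cs kq j W' \<and> W' \<subseteq> C)"
  define f where "f = (\<lambda>j W. SOME W'. P j W W')"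
  have fP: "P j W (f j W)" if "j < l" "W \<subseteq> C" for j W
    unfolding f_def using phase2_step_exists[OF that] unfolding P_def by (rule someI_ex)
  define Ws where "Ws = iter2 f"
  have WsC: "m \<le> l \<Longrightarrow> Ws m \<subseteq> C" for m
  proof (induction m)
    case 0 then show ?case unfolding Ws_def by simp
  next
    case (Suc m)
    then have "m < l" "Ws m \<subseteq> C" by auto
    from fP[OF this] show ?case unfolding Ws_def P_def by simp
  qed
  have ws: "\<forall>j<l. (step2 N A Cs kq j)\<^sup>*\<^sup>* (Ws j) (Ws (Suc j)) \<and> stop2 N A Cs kq j (Ws (Suc j))"
  proof (intro allI impI)
    fix j assume j: "j < l"
    have "P j (Ws j) (f j (Ws j))" using fP[OF j WsC[of j]] j by simp
    then show "(step2 N A Cs kq j)\<^sup>*\<^sup>* (Ws j) (Ws (Suc j)) \<and> stop2 N A Cs kq j (Ws (Suc j))"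
      unfolding P_def Ws_def by simp
  qed
  have ws0: "Ws 0 = {}" unfolding Ws_def by simp
  have P2: "Ws l \<subseteq> C \<and> (\<forall>j<l. Ws l \<inter> Cs j = Ws (Suc j) \<inter> Cs j \<and> inv2 N A Cs kq j (Ws (Suc j)))"
  proof -
    have "\<forall>j<l. (step2 N A Cs kq j)\<^sup>*\<^sup>* (Ws j) (Ws (Suc j))" using ws by blast
    from phase2_inv[of Ws l, OF ws0 this] show ?thesis by simp
  qed
  have inv2l: "\<forall>j<l. inv2 N A Cs kq j (Ws l)"
  proof (intro allI impI)
    fix j assume "j < l"
    then have "Ws l \<inter> Cs j = Ws (Suc j) \<inter> Cs j" "inv2 N A Cs kq j (Ws (Suc j))" using P2 by auto
    then show "inv2 N A Cs kq j (Ws l)" using inv2_cong[of "Ws l" Cs j "Ws (Suc j)" N A kq] by simp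
  qed
  obtain W3 where w3: "(step3 N A C l Cs kq)\<^sup>*\<^sup>* (Ws l) W3" "stop3 N A C l Cs kq W3" "W3 \<subseteq> C"
    using phase3_exists[of "Ws l"] P2 by blast
  have P3: "W3 \<subseteq> C \<and> Ws l \<subseteq> W3 \<and> (\<forall>j<l. card (W3 \<inter> Cs j) \<le> kq j) \<and>
    real (card (N - uncov N A W3)) - real (card (N - uncov N A (Ws l))) \<ge>
      (real (card W3) - real (card (Ws l))) * real (card N) / real (total_k l kq)"
    apply (rule step3_chain[OF w3(1)])
    using P2 apply blast
    using inv2l unfolding inv2_def by blast
  have "\<forall>j. \<exists>E. j < l \<longrightarrow> E \<subseteq> Cs j - W3 \<and> card E = kq j - card (W3 \<inter> Cs j)"
  proof
    fix j
    show "\<exists>E. j < l \<longrightarrow> E \<subseteq> Cs j - W3 \<and> card E = kq j - card (W3 \<inter> Cs j)"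
    proof (cases "j < l")
      case False then show ?thesis by blast
    next
      case True
      have finCs: "finite (Cs j)" using CsC[OF True] finC by (meson finite_subset)
      have "card (Cs j - W3) = card (Cs j) - card (Cs j \<inter> W3)"
        using finCs by (simp add: card_Diff_subset_Int)
      moreover have "Cs j \<inter> W3 = W3 \<inter> Cs j" by blast
      ultimately have "kq j - card (W3 \<inter> Cs j) \<le> card (Cs j - W3)" using kqC[OF True] by simp
      then obtain E where "E \<subseteq> Cs j - W3" "card E = kq j - card (W3 \<inter> Cs j)"
        by (meson obtain_subset_with_card_n)
      then show ?thesis by blast
    qed
  qed
  then obtain E where E: "\<forall>j. j < l \<longrightarrow> E j \<subseteq> Cs j - W3 \<and> card (E j) = kq j - card (W3 \<inter> Cs j)"
    using choice[of "\<lambda>j E. j < l \<longrightarrow> E \<subseteq> Cs j - W3 \<and> card E = kq j - card (W3 \<inter> Cs j)"] by blast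
  define W where "W = W3 \<union> (\<Union>j<l. E j)"
  have WC: "W \<subseteq> C" unfolding W_def using w3(3) E CsC by blast
  have cards: "card (W \<inter> Cs j) = kq j" if j: "j < l" for j
  proof -
    have "W \<inter> Cs j = (W3 \<inter> Cs j) \<union> E j"
    proof
      show "W \<inter> Cs j \<subseteq> W3 \<inter> Cs j \<union> E j"
      proof
        fix x assume x: "x \<in> W \<inter> Cs j"
        show "x \<in> W3 \<inter> Cs j \<union> E j"
        proof (cases "x \<in> W3")
          case True then show ?thesis using x by blast
        next
          case False
          then obtain j' where j': "j' < l" "x \<in> E j'" using x unfolding W_def by blast
          then have "x \<in> Cs j'" using E by blast
          then have "j' = j" using disj[OF j' (1) j] x by blast
          then show ?thesis using j' by blast
        qed
      qed
    next
      show "W3 \<inter> Cs j \<union> E j \<subseteq> W \<inter> Cs j" unfolding W_def using E j by blast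
    qed
    moreover have "finite (W3 \<inter> Cs j)" using w3(3) finC by (meson finite_Int finite_subset)
    moreover have "E j \<subseteq> C" using E j CsC[OF j] by blast
    then have "finite (E j)" using finC by (meson finite_subset)
    moreover have "(W3 \<inter> Cs j) \<inter> E j = {}" using E j by blast
    ultimately have "card (W \<inter> Cs j) = card (W3 \<inter> Cs j) + card (E j)" by (simp add: card_Un_disjoint)
    then show ?thesis using E j P3 by auto
  qed
  have "is_committee C l Cs kq W" unfolding is_committee_def using WC cards by blast
  moreover have "W3 \<subseteq> W" unfolding W_def by blast
  ultimately have "procedure_output N A C l Cs kq W"
    unfolding procedure_output_def using ws0 ws w3 by blast
  then show ?thesis by blast
qed

end

theorem mainTheorem6:
  fixes N :: "'v set" and A :: "'v \<Rightarrow> 'c set" and C :: "'c set"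
    and l :: nat and Cs :: "nat \<Rightarrow> 'c set" and kq :: "nat \<Rightarrow> nat"
  assumes "scv_instance N A C l Cs kq"
  shows "(\<exists>W. is_committee C l Cs kq W \<and> weak_SW_JR N A l Cs kq W \<and> IW_JR N A l Cs kq W)
       \<and> (\<exists>W. procedure_output N A C l Cs kq W)
       \<and> (\<forall>W. procedure_output N A C l Cs kq W \<longrightarrow>
             is_committee C l Cs kq W \<and> weak_SW_JR N A l Cs kq W \<and> IW_JR N A l Cs kq W)"
  using exists_output[OF assms] correct[OF assms] by blast

end
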